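(* Consider $\mathbb{R}^4$ with coordinates $(u_1,u_2,p_{u_1},p_{u_2})$ and the Poisson bracket $$\{u_1,u_2\}=0,\quad \{p_{u_1},p_{u_2}\}=0,\quad \{u_i,p_{u_j}\}=\delta_{ij}\,u_i .$$ On the open set where $u_1u_2\neq0$, $u_1\neq u_2$ and $p_{u_1}u_2\neq p_{u_2}u_1$, define $$a=\frac{p_{u_1}^2}{u_1-u_2}+\frac{p_{u_2}^2}{u_2-u_1}-u_1^2-u_1u_2-u_2^2,\qquad b=\frac{u_2p_{u_1}^2}{u_2-u_1}+\frac{u_1p_{u_2}^2}{u_1-u_2}+(u_1+u_2)u_1u_2,$$ $$b_1=\frac{p_{u_1}u_2-p_{u_2}u_1}{u_1u_2(u_1-u_2)},\qquad b_0=-\frac{p_{u_1}u_2^2-p_{u_2}u_1^2}{u_1u_2(u_1-u_2)},$$ so that the parabola $y=x(b_1x+b_0)$ passes through $(u_1,p_{u_1})$ and $(u_2,p_{u_2})$. Then the quartic polynomial $x^3+ax+b-x^2(b_1x+b_0)^2$ is divisible by $(x-u_1)(x-u_2)$; let $v_1,v_2$ be the roots of the quadratic quotient. On an open subset $W$ where $v_1,v_2$ are real and distinct and can be chosen as smooth functions, define $$p_{v_j}=-v_j\,(b_1v_j+b_0),\qquad j=1,2,$$ and the map $\rho:(u_1,u_2,p_{u_1},p_{u_2})\mapsto(v_1,v_2,p_{v_1},p_{v_2})$. Then: (i) $\rho$ preserves the functions $a$ and $b$, i.e. $a\circ\rho=a$ and $b\circ\rho=b$ on $W$; (ii) $\rho$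 preserves the Poisson bracket above: $\{v_1,v_2\}=0$, $\{p_{v_1},p_{v_2}\}=0$, $\{v_i,p_{v_j}\}=\delta_{ij}\,v_i$.
   Context: For the bracket $\{u_i,p_{u_j}\}=\delta_{ij}u_i$ one has $\{f,g\}=\sum_{i=1}^2 u_i\left(\frac{\partial f}{\partial u_i}\frac{\partial g}{\partial p_{u_i}}-\frac{\partial f}{\partial p_{u_i}}\frac{\partial g}{\partial u_i}\right)$. The functions $a,b$ are in involution with respect to this bracket; they are the unique functions with $p_{u_i}^2=u_i^3+au_i+b$, $i=1,2$. *)

theory Defs
  imports "HOL-Analysis.Analysis" "HOL-Computational_Algebra.Polynomial"
begin

type_synonym R4 = "real \<times> real \<times> real \<times> real"

definition cu1 :: "R4 \<Rightarrow> real" where "cu1 z = fst z"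
definition cu2 :: "R4 \<Rightarrow> real" where "cu2 z = fst (snd z)"
definition cp1 :: "R4 \<Rightarrow> real" where "cp1 z = fst (snd (snd z))"
definition cp2 :: "R4 \<Rightarrow> real" where "cp2 z = snd (snd (snd z))"

definition pd :: "(R4 \<Rightarrow> real) \<Rightarrow> R4 \<Rightarrow> R4 \<Rightarrow> real" where
  "pd f e z = frechet_derivative f (at z) e"

definition du1 :: "(R4 \<Rightarrow> real) \<Rightarrow> R4 \<Rightarrow> real" where "du1 f z = pd f (1,0,0,0) z"
definition du2 :: "(R4 \<Rightarrow> real) \<Rightarrow> R4 \<Rightarrow> real" where "du2 f z = pd f (0,1,0,0) z"
definition dp1 :: "(R4 \<Rightarrow> real) \<Rightarrow> R4 \<Rightarrow> real" where "dp1 f z = pd f (0,0,1,0) z"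
definition dp2 :: "(R4 \<Rightarrow> real) \<Rightarrow> R4 \<Rightarrow> real" where "dp2 f z = pd f (0,0,0,1) z"

definition pb :: "(R4 \<Rightarrow> real) \<Rightarrow> (R4 \<Rightarrow> real) \<Rightarrow> R4 \<Rightarrow> real" where
  "pb f g z =
     cu1 z * (du1 f z * dp1 g z - dp1 f z * du1 g z)
   + cu2 z * (du2 f z * dp2 g z - dp2 f z * du2 g z)"

definition fa :: "R4 \<Rightarrow> real" where
  "fa z = (let u1 = cu1 z; u2 = cu2 z; p1 = cp1 z; p2 = cp2 z in
     p1^2 / (u1 - u2) + p2^2 / (u2 - u1) - u1^2 - u1*u2 - u2^2)"

definition fb :: "R4 \<Rightarrow> real" where
  "fb z = (let u1 = cu1 z; u2 = cu2 z; p1 = cp1 z; p2 = cp2 z in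
     u2 * p1^2 / (u2 - u1) + u1 * p2^2 / (u1 - u2) + (u1 + u2) * u1 * u2)"

definition fb1 :: "R4 \<Rightarrow> real" where
  "fb1 z = (let u1 = cu1 z; u2 = cu2 z; p1 = cp1 z; p2 = cp2 z in
     (p1 * u2 - p2 * u1) / (u1 * u2 * (u1 - u2)))"

definition fb0 :: "R4 \<Rightarrow> real" where
  "fb0 z = (let u1 = cu1 z; u2 = cu2 z; p1 = cp1 z; p2 = cp2 z in
     - ((p1 * u2^2 - p2 * u1^2) / (u1 * u2 * (u1 - u2))))"

definition dom4 :: "R4 set" where
  "dom4 = {z. cu1 z * cu2 z \<noteq> 0 \<and> cu1 z \<noteq> cu2 z \<and> cp1 z * cu2 z \<noteq> cp2 z * cu1 z}"

definition quartic :: "R4 \<Rightarrow> real poly" where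
  "quartic z = [:fb z, fa z, 0, 1:] - [:0, fb0 z, fb1 z:]^2"

definition divisor :: "R4 \<Rightarrow> real poly" where
  "divisor z = [:- cu1 z, 1:] * [:- cu2 z, 1:]"

definition quotient :: "R4 \<Rightarrow> real poly" where
  "quotient z = quartic z div divisor z"

definition pv :: "(R4 \<Rightarrow> real) \<Rightarrow> R4 \<Rightarrow> real" where
  "pv v z = - v z * (fb1 z * v z + fb0 z)"

definition rho :: "(R4 \<Rightarrow> real) \<Rightarrow> (R4 \<Rightarrow> real) \<Rightarrow> R4 \<Rightarrow> R4" where
  "rho v1 v2 z = (v1 z, v2 z, pv v1 z, pv v2 z)"

end

theory Submission
  imports Defs
begin

definition dot4 :: "R4 \<Rightarrow> R4 \<Rightarrow> real" where
  "dot4 X h = cu1 X * cu1 h + cu2 X * cu2 h + cp1 X * cp1 h + cp2 X * cp2 h"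

definition B4 :: "R4 \<Rightarrow> R4 \<Rightarrow> R4 \<Rightarrow> real" where
  "B4 z X Y = cu1 z * (cu1 X * cp1 Y - cp1 X * cu1 Y) + cu2 z * (cu2 X * cp2 Y - cp2 X * cu2 Y)"

definition grad :: "(R4 \<Rightarrow> real) \<Rightarrow> R4 \<Rightarrow> R4" where
  "grad f z = (du1 f z, du2 f z, dp1 f z, dp2 f z)"

lemma c_simps[simp]: "cu1 (a,b,c,d) = a" "cu2 (a,b,c,d) = b" "cp1 (a,b,c,d) = c" "cp2 (a,b,c,d) = d"
  by (simp_all add: cu1_def cu2_def cp1_def cp2_def)

lemma c_lin[simp]:
  "cu1 (X + Y) = cu1 X + cu1 Y" "cu2 (X + Y) = cu2 X + cu2 Y" "cp1 (X + Y) = cp1 X + cp1 Y" "cp2 (X + Y) = cp2 X + cp2 Y"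
  "cu1 (X - Y) = cu1 X - cu1 Y" "cu2 (X - Y) = cu2 X - cu2 Y" "cp1 (X - Y) = cp1 X - cp1 Y" "cp2 (X - Y) = cp2 X - cp2 Y"
  "cu1 (- X) = - cu1 X" "cu2 (- X) = - cu2 X" "cp1 (- X) = - cp1 X" "cp2 (- X) = - cp2 X"
  "cu1 (c *\<^sub>R X) = c * cu1 X" "cu2 (c *\<^sub>R X) = c * cu2 X" "cp1 (c *\<^sub>R X) = c * cp1 X" "cp2 (c *\<^sub>R X) = c * cp2 X"
  by (simp_all add: cu1_def cu2_def cp1_def cp2_def)

lemma B4_lin[simp]:
  "B4 z (X + Y) W = B4 z X W + B4 z Y W" "B4 z W (X + Y) = B4 z W X + B4 z W Y"
  "B4 z (X - Y) W = B4 z X W - B4 z Y W" "B4 z W (X - Y) = B4 z W X - B4 z W Y"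
  "B4 z (- X) W = - B4 z X W" "B4 z W (- X) = - B4 z W X"
  "B4 z (c *\<^sub>R X) W = c * B4 z X W" "B4 z W (c *\<^sub>R X) = c * B4 z W X"
  "B4 z X X = 0"
  by (simp_all add: B4_def algebra_simps)

lemma B4_antisym: "B4 z Y X = - B4 z X Y"
  by (simp add: B4_def algebra_simps)

lemma pb_B: "pb f g z = B4 z (grad f z) (grad g z)"
  by (simp add: pb_def B4_def grad_def)

lemma grad_deriv:
  assumes "(f has_derivative (\<lambda>h. a * L h + b * dot4 X h + c * dot4 Y h + d * cu1 h + e * cu2 h)) (at z)"
  shows "grad f z = a *\<^sub>R (L (1,0,0,0), L (0,1,0,0), L (0,0,1,0), L (0,0,0,1)) + b *\<^sub>R X + c *\<^sub>R Y + (d, e, 0, 0)"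
proof -
  have "frechet_derivative f (at z) = (\<lambda>h. a * L h + b * dot4 X h + c * dot4 Y h + d * cu1 h + e * cu2 h)"
    using frechet_derivative_at[OF assms] by simp
  then show ?thesis
    by (simp add: grad_def du1_def du2_def dp1_def dp2_def pd_def dot4_def prod_eq_iff cu1_def cu2_def cp1_def cp2_def)
qed

lemma cu1_hd[derivative_intros]: "(f has_derivative f') F \<Longrightarrow> ((\<lambda>x. cu1 (f x)) has_derivative (\<lambda>x. cu1 (f' x))) F"
  unfolding cu1_def by (rule has_derivative_fst)
lemma cu2_hd[derivative_intros]: "(f has_derivative f') F \<Longrightarrow> ((\<lambda>x. cu2 (f x)) has_derivative (\<lambda>x. cu2 (f' x))) F"
  unfolding cu2_def by (intro has_derivative_fst has_derivative_snd)
lemma cp1_hd[derivative_intros]: "(f has_derivative f') F \<Longrightarrow> ((\<lambda>x. cp1 (f x)) has_derivative (\<lambda>x. cp1 (f' x))) F"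
  unfolding cp1_def by (intro has_derivative_fst has_derivative_snd)
lemma cp2_hd[derivative_intros]: "(f has_derivative f') F \<Longrightarrow> ((\<lambda>x. cp2 (f x)) has_derivative (\<lambda>x. cp2 (f' x))) F"
  unfolding cp2_def by (intro has_derivative_fst has_derivative_snd)

definition dd :: "R4 \<Rightarrow> real" where "dd z = cu1 z * cu2 z * (cu1 z - cu2 z)"

lemma dd_hd[derivative_intros]: "(f has_derivative f') (at x within s) \<Longrightarrow>
  ((\<lambda>x. dd (f x)) has_derivative (\<lambda>h. (2 * cu1 (f x) * cu2 (f x) - (cu2 (f x))^2) * cu1 (f' h)
       + ((cu1 (f x))^2 - 2 * cu1 (f x) * cu2 (f x)) * cu2 (f' h))) (at x within s)"
  unfolding dd_def
  apply (rule derivative_eq_intros refl | assumption)+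
  apply (rule ext) apply (simp add: algebra_simps power2_eq_square)
  done

definition gb1 :: "R4 \<Rightarrow> R4" where
  "gb1 z = (let u1 = cu1 z; u2 = cu2 z; b1 = fb1 z; b0 = fb0 z; D = dd z in
    (-(2*b1*u1+b0)*u2/D, (2*b1*u2+b0)*u1/D, u2/D, -u1/D))"
definition gb0 :: "R4 \<Rightarrow> R4" where
  "gb0 z = (let u1 = cu1 z; u2 = cu2 z; b1 = fb1 z; b0 = fb0 z; D = dd z in
    ((2*b1*u1+b0)*u2^2/D, -(2*b1*u2+b0)*u1^2/D, -(u2^2)/D, (u1^2)/D))"

lemma fb1_eq: "fb1 = (\<lambda>z. (cp1 z * cu2 z - cp2 z * cu1 z) / dd z)"
  by (rule ext) (simp add: fb1_def dd_def Let_def)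
lemma fb0_eq: "fb0 = (\<lambda>z. - ((cp1 z * (cu2 z)^2 - cp2 z * (cu1 z)^2) / dd z))"
  by (rule ext) (simp add: fb0_def dd_def Let_def)

lemma dom4_facts: "z \<in> dom4 \<Longrightarrow> cu1 z \<noteq> 0 \<and> cu2 z \<noteq> 0 \<and> cu1 z \<noteq> cu2 z \<and> dd z \<noteq> 0"
  by (auto simp: dom4_def dd_def)

lemma fb1_hd: assumes "z \<in> dom4" shows "(fb1 has_derivative (\<lambda>h. dot4 (gb1 z) h)) (at z)"
proof -
  from dom4_facts[OF assms] have n: "dd z \<noteq> 0" by auto
  show ?thesis unfolding fb1_eq
    apply (rule derivative_eq_intros refl | simp add: n)+
    apply (rule ext)
    apply (simp add: dot4_def gb1_def Let_def fb1_eq fb0_eq)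
    using n
    apply (simp add: field_simps)
    apply (simp add: dd_def)
    apply algebra
    done
qed

lemma fb0_hd: assumes "z \<in> dom4" shows "(fb0 has_derivative (\<lambda>h. dot4 (gb0 z) h)) (at z)"
proof -
  from dom4_facts[OF assms] have n: "dd z \<noteq> 0" by auto
  show ?thesis unfolding fb0_eq
    apply (rule derivative_eq_intros refl | simp add: n)+
    apply (rule ext)
    apply (simp add: dot4_def gb0_def Let_def fb1_eq fb0_eq)
    using n
    apply (simp add: field_simps)
    apply (simp add: dd_def)
    apply algebra
    done
qed

lemma p_rel: assumes "z \<in> dom4"
  shows "cp1 z = fb1 z * (cu1 z)^2 + fb0 z * cu1 z" "cp2 z = fb1 z * (cu2 z)^2 + fb0 z * cu2 z"
proof -
  from dom4_facts[OF assms] have n: "dd z \<noteq> 0" by auto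
  show "cp1 z = fb1 z * (cu1 z)^2 + fb0 z * cu1 z" unfolding fb1_eq fb0_eq using n
    apply (simp add: field_simps) apply (simp add: dd_def) apply algebra done
  show "cp2 z = fb1 z * (cu2 z)^2 + fb0 z * cu2 z" unfolding fb1_eq fb0_eq using n
    apply (simp add: field_simps) apply (simp add: dd_def) apply algebra done
qed

lemma fb1_nz: assumes "z \<in> dom4" shows "fb1 z \<noteq> 0"
  using assms dom4_facts[OF assms] unfolding fb1_eq dom4_def by auto

definition cc2 :: "R4 \<Rightarrow> real" where "cc2 z = - ((fb1 z)^2)"
definition cc1 :: "R4 \<Rightarrow> real" where "cc1 z = 1 - 2 * fb1 z * fb0 z - (fb1 z)^2 * (cu1 z + cu2 z)"
definition cc0 :: "R4 \<Rightarrow> real" where "cc0 z = - ((fb0 z)^2) + (cu1 z + cu2 z) * cc1 z + cu1 z * cu2 z * (fb1 z)^2"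

lemma div_swap: "(a::real) / (y - x) = - (a / (x - y))"
  by (metis minus_diff_eq divide_minus_right)

lemma fa_alg: fixes u1 u2 b1 b0 :: real assumes "u1 - u2 \<noteq> 0"
  shows "(b1*u1^2+b0*u1)^2/(u1-u2) + (b1*u2^2+b0*u2)^2/(u2-u1) - u1^2 - u1*u2 - u2^2
    = u1*u2*(1 - 2*b1*b0 - b1^2*(u1+u2)) - (u1+u2)*(-(b0^2) + (u1+u2)*(1 - 2*b1*b0 - b1^2*(u1+u2)) + u1*u2*b1^2)"
  proof -
  define d where "d = u1 - u2"
  have d0: "d \<noteq> 0" using assms d_def by simp
  have e: "u1 - u2 = d" "u2 - u1 = - d" using d_def by auto
  show ?thesis unfolding e using d0
    apply (simp add: field_simps) apply (simp add: d_def) apply ((thin_tac "_ \<noteq> _")+)? apply algebra done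
qed

lemma fb_alg: fixes u1 u2 b1 b0 :: real assumes "u1 - u2 \<noteq> 0"
  shows "u2*(b1*u1^2+b0*u1)^2/(u2-u1) + u1*(b1*u2^2+b0*u2)^2/(u1-u2) + (u1+u2)*u1*u2
    = u1*u2*(-(b0^2) + (u1+u2)*(1 - 2*b1*b0 - b1^2*(u1+u2)) + u1*u2*b1^2)"
  proof -
  define d where "d = u1 - u2"
  have d0: "d \<noteq> 0" using assms d_def by simp
  have e: "u1 - u2 = d" "u2 - u1 = - d" using d_def by auto
  show ?thesis unfolding e using d0
    apply (simp add: field_simps) apply (simp add: d_def) apply ((thin_tac "_ \<noteq> _")+)? apply algebra done
qed

lemma fa_eq: assumes "z \<in> dom4" shows "fa z = cu1 z * cu2 z * cc1 z - (cu1 z + cu2 z) * cc0 z"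
proof -
  from dom4_facts[OF assms] have n: "cu1 z - cu2 z \<noteq> 0" by auto
  show ?thesis unfolding fa_def Let_def p_rel[OF assms] cc0_def cc1_def
    using fa_alg[OF n, of "fb1 z" "fb0 z"] by (simp add: algebra_simps)
qed

lemma fb_eq: assumes "z \<in> dom4" shows "fb z = cu1 z * cu2 z * cc0 z"
proof -
  from dom4_facts[OF assms] have n: "cu1 z - cu2 z \<noteq> 0" by auto
  show ?thesis unfolding fb_def Let_def p_rel[OF assms] cc0_def cc1_def
    using fb_alg[OF n, of "fb1 z" "fb0 z"] by (simp add: algebra_simps)
qed

lemma quartic_eq: assumes "z \<in> dom4" shows "quartic z = divisor z * [:cc0 z, cc1 z, cc2 z:]"
  unfolding quartic_def divisor_def fa_eq[OF assms] fb_eq[OF assms]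
  by (simp add: cc2_def cc1_def cc0_def power2_eq_square algebra_simps)

lemma quotient_eq: assumes "z \<in> dom4" shows "quotient z = [:cc0 z, cc1 z, cc2 z:]"
proof -
  have "divisor z \<noteq> 0" unfolding divisor_def by simp
  then show ?thesis unfolding quotient_def quartic_eq[OF assms] by (rule nonzero_mult_div_cancel_left)
qed

lemma vieta: fixes c0 c1 c2 x y :: real
  assumes "c2 \<noteq> 0" "x \<noteq> y" "c0 + x * (c1 + x * c2) = 0" "c0 + y * (c1 + y * c2) = 0"
  shows "x + y = - c1 / c2" "x * y = c0 / c2"
proof -
  have "(x - y) * (c1 + c2 * (x + y)) = 0" using assms(3,4) by algebra
  then have h: "c1 + c2 * (x + y) = 0" using assms(2) by simp
  then show "x + y = - c1 / c2" using assms(1) by (simp add: field_simps)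
  have "c0 = c2 * x * y" using h assms(3) by algebra
  then show "x * y = c0 / c2" using assms(1) by (simp add: field_simps)
qed

definition SS :: "R4 \<Rightarrow> real" where "SS z = - cc1 z / cc2 z"
definition PP :: "R4 \<Rightarrow> real" where "PP z = cc0 z / cc2 z"

definition sS1 where "sS1 z = -2/(fb1 z)^3 + 2*fb0 z/(fb1 z)^2"
definition sS2 where "sS2 z = -2/fb1 z"
definition sP1 where "sP1 z = -2*(fb0 z)^2/(fb1 z)^3 + 2*(cu1 z + cu2 z)/(fb1 z)^3 - 2*(cu1 z + cu2 z)*fb0 z/(fb1 z)^2"
definition sP2 where "sP2 z = 2*fb0 z/(fb1 z)^2 + 2*(cu1 z + cu2 z)/fb1 z"
definition sP3 where "sP3 z = -(1 - 2*fb1 z*fb0 z)/(fb1 z)^2 + 2*(cu1 z + cu2 z) - cu2 z"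
definition sP4 where "sP4 z = -(1 - 2*fb1 z*fb0 z)/(fb1 z)^2 + 2*(cu1 z + cu2 z) - cu1 z"

lemma SS_hd: assumes "z \<in> dom4"
  shows "(SS has_derivative (\<lambda>h. 0 * 0 + sS1 z * dot4 (gb1 z) h + sS2 z * dot4 (gb0 z) h + (-1) * cu1 h + (-1) * cu2 h)) (at z)"
proof -
  have n: "fb1 z \<noteq> 0" using fb1_nz[OF assms] .
  have e: "SS = (\<lambda>z. - (1 - 2 * fb1 z * fb0 z - (fb1 z)^2 * (cu1 z + cu2 z)) / (- ((fb1 z)^2)))"
    by (rule ext) (simp add: SS_def cc1_def cc2_def)
  show ?thesis unfolding e
    apply (rule derivative_eq_intros refl fb1_hd[OF assms] fb0_hd[OF assms] | simp add: n)+
    apply (rule ext)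
    using n
    apply (simp add: field_simps sS1_def sS2_def)
    apply ((thin_tac "_ \<noteq> _")+)?
    apply algebra
    done
qed

lemma PP_hd: assumes "z \<in> dom4"
  shows "(PP has_derivative (\<lambda>h. 0 * 0 + sP1 z * dot4 (gb1 z) h + sP2 z * dot4 (gb0 z) h + sP3 z * cu1 h + sP4 z * cu2 h)) (at z)"
proof -
  have n: "fb1 z \<noteq> 0" using fb1_nz[OF assms] .
  have e: "PP = (\<lambda>z. (- ((fb0 z)^2) + (cu1 z + cu2 z) * (1 - 2 * fb1 z * fb0 z - (fb1 z)^2 * (cu1 z + cu2 z)) + cu1 z * cu2 z * (fb1 z)^2) / (- ((fb1 z)^2)))"
    by (rule ext) (simp add: PP_def cc0_def cc1_def cc2_def)
  show ?thesis unfolding e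
    apply (rule derivative_eq_intros refl fb1_hd[OF assms] fb0_hd[OF assms] | simp add: n)+
    apply (rule ext)
    using n
    apply (simp add: field_simps sP1_def sP2_def sP3_def sP4_def)
    apply ((thin_tac "_ \<noteq> _")+)?
    apply algebra
    done
qed

definition gSv where "gSv z = sS1 z *\<^sub>R gb1 z + sS2 z *\<^sub>R gb0 z + (-1, -1, 0, 0)"
definition gPv where "gPv z = sP1 z *\<^sub>R gb1 z + sP2 z *\<^sub>R gb0 z + (sP3 z, sP4 z, 0, 0)"

lemma grad_SS: "z \<in> dom4 \<Longrightarrow> grad SS z = gSv z"
  using grad_deriv[OF SS_hd] by (simp add: gSv_def zero_prod_def)
lemma grad_PP: "z \<in> dom4 \<Longrightarrow> grad PP z = gPv z"
  using grad_deriv[OF PP_hd] by (simp add: gPv_def zero_prod_def)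

lemma B_basic: assumes "z \<in> dom4"
  shows "B4 z (gb1 z) (gb0 z) = 0" "B4 z (gb0 z) (gb1 z) = 0"
    "B4 z (a,b,0,0) (gb1 z) = (a - b) / (cu1 z - cu2 z)"
    "B4 z (gb1 z) (a,b,0,0) = - ((a - b) / (cu1 z - cu2 z))"
    "B4 z (a,b,0,0) (gb0 z) = (b * cu1 z - a * cu2 z) / (cu1 z - cu2 z)"
    "B4 z (gb0 z) (a,b,0,0) = - ((b * cu1 z - a * cu2 z) / (cu1 z - cu2 z))"
    "B4 z (a,b,0,0) (c,d,0,0) = 0"
proof -
  from dom4_facts[OF assms] have n: "cu1 z \<noteq> 0" "cu2 z \<noteq> 0" "cu1 z - cu2 z \<noteq> 0" "dd z \<noteq> 0" by auto
  have b1: "B4 z (gb1 z) (gb0 z) = 0"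
    unfolding B4_def gb1_def gb0_def Let_def using n(4)
    by (simp add: field_simps)
  have b2: "B4 z (a,b,0,0) (gb1 z) = (a - b) / (cu1 z - cu2 z)"
    unfolding B4_def gb1_def Let_def using n
    apply (simp add: field_simps) apply (simp add: dd_def) apply ((thin_tac "_ \<noteq> _")+)? apply algebra done
  have b3: "B4 z (a,b,0,0) (gb0 z) = (b * cu1 z - a * cu2 z) / (cu1 z - cu2 z)"
    unfolding B4_def gb0_def Let_def using n
    apply (simp add: field_simps) apply (simp add: dd_def) apply ((thin_tac "_ \<noteq> _")+)? apply algebra done
  show "B4 z (gb1 z) (gb0 z) = 0" "B4 z (gb0 z) (gb1 z) = 0"
    "B4 z (a,b,0,0) (gb1 z) = (a - b) / (cu1 z - cu2 z)"
    "B4 z (gb1 z) (a,b,0,0) = - ((a - b) / (cu1 z - cu2 z))"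
    "B4 z (a,b,0,0) (gb0 z) = (b * cu1 z - a * cu2 z) / (cu1 z - cu2 z)"
    "B4 z (gb0 z) (a,b,0,0) = - ((b * cu1 z - a * cu2 z) / (cu1 z - cu2 z))"
    "B4 z (a,b,0,0) (c,d,0,0) = 0"
    using b1 b2 b3 B4_antisym[of z "gb1 z" "gb0 z"] B4_antisym[of z "gb1 z" "(a,b,0,0)"]
      B4_antisym[of z "gb0 z" "(a,b,0,0)"]
    by (auto simp: B4_def)
qed

lemma B_level1: assumes "z \<in> dom4"
  shows "B4 z (gSv z) (gPv z) = 0" "B4 z (gSv z) (gb1 z) = 0" "B4 z (gSv z) (gb0 z) = -1"
    "B4 z (gPv z) (gb1 z) = 1" "B4 z (gPv z) (gb0 z) = - SS z"
proof -
  from dom4_facts[OF assms] have n: "cu1 z - cu2 z \<noteq> 0" by auto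
  have nb: "fb1 z \<noteq> 0" using fb1_nz[OF assms] .
  note bb = B_basic[OF assms]
  show "B4 z (gSv z) (gb1 z) = 0"
    unfolding gSv_def using n by (simp add: bb)
  show "B4 z (gSv z) (gb0 z) = -1"
    unfolding gSv_def using n nb by (simp add: bb sS2_def field_simps)
  show "B4 z (gPv z) (gb1 z) = 1"
    unfolding gPv_def using n nb by (simp add: bb sP3_def sP4_def field_simps)
  show "B4 z (gPv z) (gb0 z) = - SS z"
    unfolding gPv_def using n nb
    by (simp add: bb sP2_def sP3_def sP4_def SS_def cc1_def cc2_def field_simps)
  show "B4 z (gSv z) (gPv z) = 0"
    unfolding gSv_def gPv_def using n nb
    apply (simp add: bb sS1_def sS2_def sP1_def sP2_def sP3_def sP4_def field_simps)
    apply ((thin_tac "_ \<noteq> _")+)?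
    apply algebra
    done
qed

lemma solve_g:
  fixes g1 g2 gS gP :: R4 and v1 v2 :: real
  assumes "v1 \<noteq> v2" "g1 + g2 = gS" "v1 *\<^sub>R g2 + v2 *\<^sub>R g1 = gP"
  shows "g1 = inverse (v2 - v1) *\<^sub>R (gP - v1 *\<^sub>R gS)" "g2 = inverse (v1 - v2) *\<^sub>R (gP - v2 *\<^sub>R gS)"
proof -
  have g2: "g2 = gS - g1" using assms(2) by (metis add_diff_cancel_left')
  have g1: "g1 = gS - g2" using assms(2) by (metis add_diff_cancel_right')
  have "(v2 - v1) *\<^sub>R g1 = gP - v1 *\<^sub>R gS" using assms(3) unfolding g2
    by (simp add: algebra_simps)
  then have "inverse (v2 - v1) *\<^sub>R ((v2 - v1) *\<^sub>R g1) = inverse (v2 - v1) *\<^sub>R (gP - v1 *\<^sub>R gS)" by simp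
  then show "g1 = inverse (v2 - v1) *\<^sub>R (gP - v1 *\<^sub>R gS)" using assms(1) by simp
  have "(v1 - v2) *\<^sub>R g2 = gP - v2 *\<^sub>R gS" using assms(3) unfolding g1
    by (simp add: algebra_simps)
  then have "inverse (v1 - v2) *\<^sub>R ((v1 - v2) *\<^sub>R g2) = inverse (v1 - v2) *\<^sub>R (gP - v2 *\<^sub>R gS)" by simp
  then show "g2 = inverse (v1 - v2) *\<^sub>R (gP - v2 *\<^sub>R gS)" using assms(1) by simp
qed

lemma level2:
  fixes g1 g2 gS gP X Y :: R4 and v1 v2 b1 b0 S :: real
  assumes ne: "v1 \<noteq> v2" and S: "S = v1 + v2"
    and e1: "g1 + g2 = gS" and e2: "v1 *\<^sub>R g2 + v2 *\<^sub>R g1 = gP"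
    and h1: "B4 z gS gP = 0" and h2: "B4 z gS X = 0" and h3: "B4 z gS Y = -1"
    and h4: "B4 z gP X = 1" and h5: "B4 z gP Y = - S" and h6: "B4 z X Y = 0"
    and q1: "q1 = -(2 * b1 * v1 + b0) *\<^sub>R g1 - v1^2 *\<^sub>R X - v1 *\<^sub>R Y"
    and q2: "q2 = -(2 * b1 * v2 + b0) *\<^sub>R g2 - v2^2 *\<^sub>R X - v2 *\<^sub>R Y"
  shows "B4 z g1 g2 = 0" "B4 z q1 q2 = 0" "B4 z g1 q1 = v1" "B4 z g2 q2 = v2"
    "B4 z g1 q2 = 0" "B4 z g2 q1 = 0"
proof -
  note sg = solve_g[OF ne e1 e2]
  have f: "B4 z gP gS = 0" "B4 z X gS = 0" "B4 z Y gS = 1" "B4 z X gP = -1" "B4 z Y gP = S" "B4 z Y X = 0"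
    using h1 h2 h3 h4 h5 h6 B4_antisym[of z gS gP] B4_antisym[of z gS X] B4_antisym[of z gS Y]
      B4_antisym[of z gP X] B4_antisym[of z gP Y] B4_antisym[of z X Y] by auto
  define d where "d = v1 - v2"
  have d0: "d \<noteq> 0" using ne d_def by simp
  have de: "v1 - v2 = d" "v2 - v1 = - d" using d_def by auto
  note all = h1 h2 h3 h4 h5 h6 f
  show "B4 z g1 g2 = 0" unfolding sg using d0 by (simp add: all)
  show "B4 z g1 q1 = v1" unfolding q1 sg de using d0
    apply (simp add: all S field_simps power2_eq_square) apply (simp add: d_def) apply ((thin_tac "_ \<noteq> _")+)? apply algebra done
  show "B4 z g2 q2 = v2" unfolding q2 sg de using d0
    apply (simp add: all S field_simps power2_eq_square) apply (simp add: d_def) apply ((thin_tac "_ \<noteq> _")+)? apply algebra done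
  show "B4 z g1 q2 = 0" unfolding q2 sg de using d0
    by (simp add: all S field_simps power2_eq_square)
  show "B4 z g2 q1 = 0" unfolding q1 sg de using d0
    by (simp add: all S field_simps power2_eq_square)
  show "B4 z q1 q2 = 0" unfolding q1 q2 sg de using d0
    by (simp add: all S field_simps power2_eq_square)
qed

lemma grad_hd: assumes "(f has_derivative F) (at z)"
  shows "grad f z = (F (1,0,0,0), F (0,1,0,0), F (0,0,1,0), F (0,0,0,1))"
  using frechet_derivative_at[OF assms, symmetric]
  by (simp add: grad_def du1_def du2_def dp1_def dp2_def pd_def)

lemma R4_eq: "X = Y \<longleftrightarrow> cu1 X = cu1 Y \<and> cu2 X = cu2 Y \<and> cp1 X = cp1 Y \<and> cp2 X = cp2 Y"
  by (auto simp: cu1_def cu2_def cp1_def cp2_def prod_eq_iff)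

lemma pv_grad: assumes "z \<in> dom4" and hv: "(v has_derivative Dv) (at z)"
  shows "grad (pv v) z = -(2 * fb1 z * v z + fb0 z) *\<^sub>R grad v z - (v z)^2 *\<^sub>R gb1 z - v z *\<^sub>R gb0 z"
proof -
  have e: "pv v = (\<lambda>y. - v y * (fb1 y * v y + fb0 y))" by (rule ext) (simp add: pv_def)
  have "(pv v has_derivative (\<lambda>h. - Dv h * (fb1 z * v z + fb0 z) - v z * (dot4 (gb1 z) h * v z + fb1 z * Dv h + dot4 (gb0 z) h))) (at z)"
    unfolding e
    apply (rule derivative_eq_intros refl hv fb1_hd[OF assms(1)] fb0_hd[OF assms(1)] | simp)+
    apply (rule ext) apply (simp add: algebra_simps)
    done
  from grad_hd[OF this] grad_hd[OF hv] show ?thesis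
    by (simp add: R4_eq dot4_def algebra_simps power2_eq_square)
qed

lemma curve_alg: fixes x y a b q1 q2 :: real
  assumes ne: "x \<noteq> y" and h1: "q1^2 = x^3 + a*x + b" and h2: "q2^2 = y^3 + a*y + b"
  shows "q1^2 / (x - y) + q2^2 / (y - x) - x^2 - x*y - y^2 = a"
    "y * q1^2 / (y - x) + x * q2^2 / (x - y) + (x + y) * x * y = b"
proof -
  define d where "d = x - y"
  have d0: "d \<noteq> 0" using ne d_def by simp
  have de: "x - y = d" "y - x = - d" using d_def by auto
  show "q1^2 / (x - y) + q2^2 / (y - x) - x^2 - x*y - y^2 = a"
    unfolding de h1 h2 using d0
    apply (simp add: field_simps) apply (simp add: d_def) apply ((thin_tac "_ \<noteq> _")+)? apply algebra done
  show "y * q1^2 / (y - x) + x * q2^2 / (x - y) + (x + y) * x * y = b"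
    unfolding de h1 h2 using d0
    apply (simp add: field_simps) apply (simp add: d_def) apply ((thin_tac "_ \<noteq> _")+)? apply algebra done
qed

theorem proposition4:
  fixes W :: "R4 set" and v1 v2 :: "R4 \<Rightarrow> real"
  assumes "open W" and "W \<subseteq> dom4"
    and "\<And>z. z \<in> W \<Longrightarrow> v1 differentiable (at z)"
    and "\<And>z. z \<in> W \<Longrightarrow> v2 differentiable (at z)"
    and "\<And>z. z \<in> W \<Longrightarrow> poly (quotient z) (v1 z) = 0"
    and "\<And>z. z \<in> W \<Longrightarrow> poly (quotient z) (v2 z) = 0"
    and "\<And>z. z \<in> W \<Longrightarrow> v1 z \<noteq> v2 z"
  shows "(\<forall>z\<in>dom4. divisor z dvd quartic z)
    \<and> (\<forall>z\<in>W. fa (rho v1 v2 z) = fa z \<and> fb (rho v1 v2 z) = fb z)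
    \<and> (\<forall>z\<in>W. pb v1 v2 z = 0 \<and> pb (pv v1) (pv v2) z = 0
         \<and> pb v1 (pv v1) z = v1 z \<and> pb v2 (pv v2) z = v2 z
         \<and> pb v1 (pv v2) z = 0 \<and> pb v2 (pv v1) z = 0)"
proof -
  have part1: "\<forall>z\<in>dom4. divisor z dvd quartic z"
    using quartic_eq by (metis dvd_triv_left)
  have Wd: "\<And>z. z \<in> W \<Longrightarrow> z \<in> dom4" using assms(2) by auto
  have roots: "cc0 z + v * (cc1 z + v * cc2 z) = 0"
    if "z \<in> W" "poly (quotient z) v = 0" for z v
    using that quotient_eq[OF Wd[OF that(1)]] by simp
  have c2nz: "cc2 z \<noteq> 0" if "z \<in> W" for z
    using fb1_nz[OF Wd[OF that]] by (simp add: cc2_def)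
  have SP: "v1 z + v2 z = SS z \<and> v1 z * v2 z = PP z" if "z \<in> W" for z
    using vieta[OF c2nz[OF that] assms(7)[OF that] roots[OF that assms(5)[OF that]] roots[OF that assms(6)[OF that]]]
    by (simp add: SS_def PP_def)
  have curve: "(pv v z)^2 = (v z)^3 + fa z * v z + fb z"
    if "z \<in> W" "poly (quotient z) (v z) = 0" for z v
  proof -
    have "poly (quartic z) (v z) = 0"
    proof -
      have q: "quartic z = divisor z * quotient z"
        using quartic_eq[OF Wd[OF that(1)]] quotient_eq[OF Wd[OF that(1)]] by simp
      show ?thesis unfolding q poly_mult using that(2) by simp
    qed
    then show ?thesis unfolding quartic_def pv_def
      by (simp add: poly_diff) (simp add: algebra_simps power2_eq_square power3_eq_cube)
  qed
  have part2: "\<forall>z\<in>W. fa (rho v1 v2 z) = fa z \<and> fb (rho v1 v2 z) = fb z"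
  proof
    fix z assume z: "z \<in> W"
    note c1 = curve[of z v1, OF z assms(5)[OF z]] and c2 = curve[of z v2, OF z assms(6)[OF z]]
    show "fa (rho v1 v2 z) = fa z \<and> fb (rho v1 v2 z) = fb z"
      unfolding rho_def fa_def fb_def Let_def c_simps
      using curve_alg[OF assms(7)[OF z] c1 c2] by (simp add: fa_def fb_def Let_def)
  qed
  have part3: "pb v1 v2 z = 0 \<and> pb (pv v1) (pv v2) z = 0
         \<and> pb v1 (pv v1) z = v1 z \<and> pb v2 (pv v2) z = v2 z
         \<and> pb v1 (pv v2) z = 0 \<and> pb v2 (pv v1) z = 0" if z: "z \<in> W" for z
  proof -
    have zd: "z \<in> dom4" using Wd[OF z] .
    define D1 where "D1 = frechet_derivative v1 (at z)"
    define D2 where "D2 = frechet_derivative v2 (at z)"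
    have h1: "(v1 has_derivative D1) (at z)" unfolding D1_def
      using assms(3)[OF z] by (rule frechet_derivative_works[THEN iffD1])
    have h2: "(v2 has_derivative D2) (at z)" unfolding D2_def
      using assms(4)[OF z] by (rule frechet_derivative_works[THEN iffD1])
    have hs: "(SS has_derivative (\<lambda>h. D1 h + D2 h)) (at z)"
      by (rule has_derivative_transform_within_open[OF has_derivative_add[OF h1 h2] assms(1) z])
        (use SP in auto)
    have hp: "(PP has_derivative (\<lambda>h. v1 z * D2 h + D1 h * v2 z)) (at z)"
      by (rule has_derivative_transform_within_open[OF has_derivative_mult[OF h1 h2] assms(1) z])
        (use SP in auto)
    have e1: "grad v1 z + grad v2 z = gSv z"
      using grad_hd[OF hs] grad_hd[OF h1] grad_hd[OF h2] grad_SS[OF zd] by simp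
    have e2: "v1 z *\<^sub>R grad v2 z + v2 z *\<^sub>R grad v1 z = gPv z"
      using grad_hd[OF hp] grad_hd[OF h1] grad_hd[OF h2] grad_PP[OF zd] by (simp add: algebra_simps)
    note L1 = B_level1[OF zd]
    note L = level2[OF assms(7)[OF z] _ e1 e2 L1(1) L1(2) L1(3) L1(4) L1(5) B_basic(1)[OF zd]
      pv_grad[OF zd h1] pv_grad[OF zd h2]]
    have S: "SS z = v1 z + v2 z" using SP[OF z] by simp
    show ?thesis unfolding pb_B using L[OF S] by simp
  qed
  show ?thesis using part1 part2 part3 by blast
qed

end
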